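(* Let $P,Q\in\mathbb P_d$ and $R=\gamma^{\mathrm{AI}}_{P^{-1}Q^{-1}}(t)$ for some $t\in[0,1]$. Then $\operatorname{F}_R(P,Q)=\operatorname{F}^{\mathrm M}(P,Q)$.
   Context: $\mathbb P_d$ is the set of $d\times d$ complex positive definite matrices; $A\#B:=A^{1/2}(A^{-1/2}BA^{-1/2})^{1/2}A^{1/2}$. The affine-invariant geodesic between $A,B\in\mathbb P_d$ is $\gamma^{\mathrm{AI}}_{AB}(t):=A^{1/2}(A^{-1/2}BA^{-1/2})^tA^{1/2}$, $t\in[0,1]$; thus $\gamma^{\mathrm{AI}}_{P^{-1}Q^{-1}}(t)=P^{-1/2}(P^{1/2}Q^{-1}P^{1/2})^tP^{-1/2}$. The generalized fidelity is $\operatorname{F}_R(P,Q):=\operatorname{Tr}\big[\sqrt{R^{1/2}PR^{1/2}}\,R^{-1}\sqrt{R^{1/2}QR^{1/2}}\big]$, and the Matsumoto fidelity is $\operatorname{F}^{\mathrm M}(P,Q):=\operatorname{Tr}[P\#Q]$. *)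

theory Defs
  imports "Jordan_Normal_Form.Schur_Decomposition"
begin

definition mtrace :: "complex mat \<Rightarrow> complex" where
  "mtrace A = (\<Sum>i<dim_row A. A $$ (i, i))"

definition posdef :: "nat \<Rightarrow> complex mat \<Rightarrow> bool" where
  "posdef d A \<longleftrightarrow> A \<in> carrier_mat d d \<and> mat_adjoint A = A \<and>
     (\<forall>v \<in> carrier_vec d. v \<noteq> 0\<^sub>v d \<longrightarrow> 0 < Re (conjugate v \<bullet> (A *\<^sub>v v)))"

definition unitary_mat :: "nat \<Rightarrow> complex mat \<Rightarrow> bool" where
  "unitary_mat d U \<longleftrightarrow> U \<in> carrier_mat d d \<and> U * mat_adjoint U = 1\<^sub>m d \<and> mat_adjoint U * U = 1\<^sub>m d"

definition minv :: "complex mat \<Rightarrow> complex mat" where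
  "minv A = (THE B. B \<in> carrier_mat (dim_row A) (dim_row A) \<and>
                    A * B = 1\<^sub>m (dim_row A) \<and> B * A = 1\<^sub>m (dim_row A))"

definition mpow :: "complex mat \<Rightarrow> real \<Rightarrow> complex mat" where
  "mpow A t = (THE B. \<exists>U D. unitary_mat (dim_row A) U \<and>
       D \<in> carrier_mat (dim_row A) (dim_row A) \<and> diagonal_mat D \<and>
       (\<forall>i < dim_row A. Im (D $$ (i, i)) = 0 \<and> 0 < Re (D $$ (i, i))) \<and>
       A = U * D * mat_adjoint U \<and>
       B = U * mat (dim_row A) (dim_row A)
              (\<lambda>(i, j). if i = j then complex_of_real (Re (D $$ (i, i)) powr t) else 0)
           * mat_adjoint U)"

definition msqrt :: "complex mat \<Rightarrow> complex mat" where
  "msqrt A = mpow A (1/2)"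

definition mgeo_mean :: "complex mat \<Rightarrow> complex mat \<Rightarrow> complex mat" where
  "mgeo_mean A B = msqrt A * msqrt (mpow A (-1/2) * B * mpow A (-1/2)) * msqrt A"

definition ai_geodesic :: "complex mat \<Rightarrow> complex mat \<Rightarrow> real \<Rightarrow> complex mat" where
  "ai_geodesic A B t = msqrt A * mpow (mpow A (-1/2) * B * mpow A (-1/2)) t * msqrt A"

definition gen_fidelity :: "complex mat \<Rightarrow> complex mat \<Rightarrow> complex mat \<Rightarrow> complex" where
  "gen_fidelity R P Q = mtrace (msqrt (msqrt R * P * msqrt R) * minv R * msqrt (msqrt R * Q * msqrt R))"

definition matsumoto_fidelity :: "complex mat \<Rightarrow> complex mat \<Rightarrow> complex" where
  "matsumoto_fidelity P Q = mtrace (mgeo_mean P Q)"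

end

theory Submission
  imports Defs "Jordan_Normal_Form.Spectral_Radius"
begin

lemma mprod_index:
  assumes "i < dim_row A" "j < dim_col B" "dim_col A = dim_row B"
  shows "(A * B) $$ (i,j) = (\<Sum>k<dim_col A. A $$ (i,k) * B $$ (k,j))"
  using assms by (simp add: scalar_prod_def atLeast0LessThan)

declare index_mult_mat(1)[simp del]
declare mprod_index[simp]

lemma adj_dim[simp]: "dim_row (mat_adjoint A) = dim_col A" "dim_col (mat_adjoint A) = dim_row A"
  by (auto simp: mat_adjoint_def)

lemma adj_index[simp]: "i < dim_col A \<Longrightarrow> j < dim_row A \<Longrightarrow> mat_adjoint A $$ (i,j) = cnj (A $$ (j,i))"
  by (simp add: mat_adjoint_def mat_of_rows_def)

lemma adj_carrier[simp]: "A \<in> carrier_mat n m \<Longrightarrow> mat_adjoint A \<in> carrier_mat m n"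
  unfolding carrier_mat_def by simp

lemma adj_adj[simp]: "mat_adjoint (mat_adjoint (A::complex mat)) = A"
  by (rule eq_matI; simp)

lemma adj_mult:
  fixes A B :: "complex mat"
  assumes "dim_col A = dim_row B"
  shows "mat_adjoint (A * B) = mat_adjoint B * mat_adjoint A"
proof (rule eq_matI)
  fix i j assume ij: "i < dim_row (mat_adjoint B * mat_adjoint A)" "j < dim_col (mat_adjoint B * mat_adjoint A)"
  then show "mat_adjoint (A * B) $$ (i, j) = (mat_adjoint B * mat_adjoint A) $$ (i, j)"
  proof -
    have i: "i < dim_col B" and j: "j < dim_row A" using ij by auto
    have "mat_adjoint (A * B) $$ (i, j) = cnj (\<Sum>k<dim_col A. A $$ (j,k) * B $$ (k,i))"
      using i j assms by simp
    also have "\<dots> = (\<Sum>k<dim_row B. cnj (B $$ (k,i)) * cnj (A $$ (j,k)))"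
      unfolding cnj_sum complex_cnj_mult by (subst assms, rule sum.cong, rule refl, rule mult.commute)
    also have "\<dots> = (\<Sum>k<dim_row B. mat_adjoint B $$ (i,k) * mat_adjoint A $$ (k,j))"
      by (rule sum.cong, rule refl, insert i j assms, simp)
    also have "\<dots> = (mat_adjoint B * mat_adjoint A) $$ (i, j)"
      using i j assms by simp
    finally show ?thesis .
  qed
qed simp_all

lemma adj_one[simp]: "mat_adjoint (1\<^sub>m n :: complex mat) = 1\<^sub>m n"
  by (rule eq_matI; simp)

definition dmat :: "nat \<Rightarrow> (nat \<Rightarrow> real) \<Rightarrow> complex mat" where
  "dmat n f = mat n n (\<lambda>(i,j). if i = j then complex_of_real (f i) else 0)"

lemma dmat_carrier[simp]: "dmat n f \<in> carrier_mat n n" "dim_row (dmat n f) = n" "dim_col (dmat n f) = n"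
  by (simp_all add: dmat_def)

lemma dmat_index[simp]: "i < n \<Longrightarrow> j < n \<Longrightarrow> dmat n f $$ (i,j) = (if i = j then complex_of_real (f i) else 0)"
  by (simp add: dmat_def)


lemma mult_dmat_index:
  "i < dim_row A \<Longrightarrow> j < n \<Longrightarrow> dim_col A = n \<Longrightarrow> (A * dmat n f) $$ (i,j) = A $$ (i,j) * f j"
  by (simp add: if_distrib[where f="\<lambda>x. _ * x"] sum.delta cong: if_cong)

lemma dmat_mult_index:
  "i < n \<Longrightarrow> j < dim_col A \<Longrightarrow> dim_row A = n \<Longrightarrow> (dmat n f * A) $$ (i,j) = f i * A $$ (i,j)"
  by (simp add: if_distrib[where f="\<lambda>x. x * _"] sum.delta cong: if_cong)

lemma dmat_mult_dmat: "dmat n f * dmat n g = dmat n (\<lambda>i. f i * g i)"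
  by (rule eq_matI; simp add: mult_dmat_index del: mprod_index)

lemma adj_dmat[simp]: "mat_adjoint (dmat n f) = dmat n f"
  by (rule eq_matI; simp)

lemma dmat_one: "dmat n (\<lambda>_. 1) = 1\<^sub>m n"
  by (rule eq_matI; simp)


lemma mult_cancel_left:
  fixes A B X :: "complex mat"
  assumes "A \<in> carrier_mat n n" "B \<in> carrier_mat n n" "X \<in> carrier_mat n m" "A * B = 1\<^sub>m n"
  shows "A * (B * X) = X"
proof -
  have "(A * B) * X = A * (B * X)" by (rule assoc_mult_mat[OF assms(1-3)])
  thus ?thesis using assms(4) left_mult_one_mat[OF assms(3)] by simp
qed

lemma unitary_carrier: "unitary_mat d U \<Longrightarrow> U \<in> carrier_mat d d"
  by (simp add: unitary_mat_def)

lemma unitary_mult: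
  assumes U: "unitary_mat d U" and V: "unitary_mat d V"
  shows "unitary_mat d (U * V)"
proof -
  have Uc: "U \<in> carrier_mat d d" and Vc: "V \<in> carrier_mat d d" using U V by (simp_all add: unitary_mat_def)
  have UU: "U * mat_adjoint U = 1\<^sub>m d" "mat_adjoint U * U = 1\<^sub>m d"
   and VV: "V * mat_adjoint V = 1\<^sub>m d" "mat_adjoint V * V = 1\<^sub>m d" using U V by (simp_all add: unitary_mat_def)
  have adj: "mat_adjoint (U * V) = mat_adjoint V * mat_adjoint U" using Uc Vc by (simp add: adj_mult)
  have aU: "mat_adjoint U \<in> carrier_mat d d" and aV: "mat_adjoint V \<in> carrier_mat d d" using Uc Vc by simp_all
  have as: "\<And>X Y Z. X \<in> carrier_mat d d \<Longrightarrow> Y \<in> carrier_mat d d \<Longrightarrow> Z \<in> carrier_mat d d \<Longrightarrow> X * Y * Z = X * (Y * Z)"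
    by (rule assoc_mult_mat)
  have mc: "\<And>X Y. X \<in> carrier_mat d d \<Longrightarrow> Y \<in> carrier_mat d d \<Longrightarrow> X * Y \<in> carrier_mat d d"
    by (rule mult_carrier_mat)
  have c1: "\<And>X. X \<in> carrier_mat d d \<Longrightarrow> V * (mat_adjoint V * X) = X"
    using mult_cancel_left[OF Vc aV _ VV(1)] by blast
  have c2: "\<And>X. X \<in> carrier_mat d d \<Longrightarrow> mat_adjoint U * (U * X) = X"
    using mult_cancel_left[OF aU Uc _ UU(2)] by blast
  have 1: "U * V * mat_adjoint (U * V) = 1\<^sub>m d" unfolding adj using Uc Vc aU aV
    by (simp add: as mc c1 UU)
  have 2: "mat_adjoint (U * V) * (U * V) = 1\<^sub>m d" unfolding adj using Uc Vc aU aV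
    by (simp add: as mc c2 VV)
  show ?thesis unfolding unitary_mat_def using 1 2 Uc Vc by simp
qed

lemma dmat_cong: "(\<And>i. i < n \<Longrightarrow> f i = g i) \<Longrightarrow> dmat n f = dmat n g"
  by (rule eq_matI; simp)

lemma diag_eq_dmat:
  assumes "D \<in> carrier_mat d d" "diagonal_mat D" "\<forall>i<d. Im (D $$ (i,i)) = 0"
  shows "D = dmat d (\<lambda>i. Re (D $$ (i,i)))"
proof (rule eq_matI)
  fix i j assume "i < dim_row (dmat d (\<lambda>i. Re (D $$ (i, i))))" "j < dim_col (dmat d (\<lambda>i. Re (D $$ (i, i))))"
  then have ij: "i < d" "j < d" by simp_all
  show "D $$ (i, j) = dmat d (\<lambda>i. Re (D $$ (i, i))) $$ (i, j)"
  proof (cases "i = j")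
    case True thus ?thesis using ij assms(3) by (simp add: complex_eq_iff)
  next
    case False thus ?thesis using ij assms(1,2) by (simp add: diagonal_mat_def)
  qed
qed (insert assms, simp_all)

lemma udec_unique:
  assumes U: "unitary_mat d U" and V: "unitary_mat d V"
  and eq: "U * dmat d f * mat_adjoint U = V * dmat d g * mat_adjoint V"
  shows "U * dmat d (\<lambda>i. \<phi> (f i)) * mat_adjoint U = V * dmat d (\<lambda>i. \<phi> (g i)) * mat_adjoint V"
proof -
  have as: "\<And>X Y Z. X \<in> carrier_mat d d \<Longrightarrow> Y \<in> carrier_mat d d \<Longrightarrow> Z \<in> carrier_mat d d \<Longrightarrow> X * Y * Z = X * (Y * Z)"
    by (rule assoc_mult_mat)
  have mc: "\<And>X Y. X \<in> carrier_mat d d \<Longrightarrow> Y \<in> carrier_mat d d \<Longrightarrow> X * Y \<in> carrier_mat d d"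
    by (rule mult_carrier_mat)
  have Uc: "U \<in> carrier_mat d d" and Vc: "V \<in> carrier_mat d d" using U V by (simp_all add: unitary_mat_def)
  have UU: "U * mat_adjoint U = 1\<^sub>m d" "mat_adjoint U * U = 1\<^sub>m d"
   and VV: "V * mat_adjoint V = 1\<^sub>m d" "mat_adjoint V * V = 1\<^sub>m d" using U V by (simp_all add: unitary_mat_def)
  have aU: "mat_adjoint U \<in> carrier_mat d d" and aV: "mat_adjoint V \<in> carrier_mat d d" using Uc Vc by simp_all
  have cl1: "\<And>X. X \<in> carrier_mat d d \<Longrightarrow> mat_adjoint V * (V * X) = X"
    using mult_cancel_left[OF aV Vc _ VV(2)] by blast
  define W where "W = mat_adjoint V * U"
  have Wc: "W \<in> carrier_mat d d" unfolding W_def using aV Uc by simp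
  have "mat_adjoint V * (U * dmat d f * mat_adjoint U) * U = mat_adjoint V * (V * dmat d g * mat_adjoint V) * U"
    using eq by simp
  also have "mat_adjoint V * (U * dmat d f * mat_adjoint U) * U = W * dmat d f"
    unfolding W_def using Uc Vc aU aV
    by (simp add: as mc UU right_mult_one_mat)
  also have "mat_adjoint V * (V * dmat d g * mat_adjoint V) * U = dmat d g * W"
    unfolding W_def using Uc Vc aU aV
    by (simp add: as mc cl1)
  finally have WD: "W * dmat d f = dmat d g * W" .
  have WD2: "W * dmat d (\<lambda>i. \<phi> (f i)) = dmat d (\<lambda>i. \<phi> (g i)) * W"
  proof (rule eq_matI)
    fix i j assume "i < dim_row (dmat d (\<lambda>i. \<phi> (g i)) * W)" "j < dim_col (dmat d (\<lambda>i. \<phi> (g i)) * W)"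
    then have ij: "i < d" "j < d" using Wc by simp_all
    have e: "W $$ (i,j) * f j = g i * W $$ (i,j)"
      using arg_cong[OF WD, of "\<lambda>M. M $$ (i,j)"] ij Wc
      by (simp add: mult_dmat_index dmat_mult_index del: mprod_index)
    have "W $$ (i,j) * \<phi> (f j) = \<phi> (g i) * W $$ (i,j)"
    proof (cases "W $$ (i,j) = 0")
      case True thus ?thesis by simp
    next
      case False
      then have "complex_of_real (f j) = complex_of_real (g i)" using e
        by (metis mult.commute mult_left_cancel)
      then have "f j = g i" by simp
      thus ?thesis by (simp add: mult.commute)
    qed
    thus "(W * dmat d (\<lambda>i. \<phi> (f i))) $$ (i, j) = (dmat d (\<lambda>i. \<phi> (g i)) * W) $$ (i, j)"
      using ij Wc by (simp add: mult_dmat_index dmat_mult_index del: mprod_index)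
  qed (insert Wc, simp_all)
  have UVW: "U = V * W" unfolding W_def using mult_cancel_left[OF Vc aV Uc VV(1)] by simp
  have "U * dmat d (\<lambda>i. \<phi> (f i)) * mat_adjoint U = V * (W * dmat d (\<lambda>i. \<phi> (f i))) * mat_adjoint U"
    using Vc Wc by (simp add: UVW as mc)
  also have "\<dots> = V * dmat d (\<lambda>i. \<phi> (g i)) * (W * mat_adjoint U)"
    unfolding WD2 using Vc Wc aU by (simp add: as mc)
  also have "W * mat_adjoint U = mat_adjoint V"
    unfolding W_def using aV Uc aU by (simp add: as mc UU right_mult_one_mat)
  finally show ?thesis .
qed

lemma mpow_udec:
  assumes U: "unitary_mat d U" and f: "\<And>i. i < d \<Longrightarrow> 0 < f i"
    and X: "X = U * dmat d f * mat_adjoint U"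
  shows "mpow X t = U * dmat d (\<lambda>i. f i powr t) * mat_adjoint U"
proof -
  have Uc: "U \<in> carrier_mat d d" using U by (simp add: unitary_mat_def)
  have dX: "dim_row X = d" using X Uc by simp
  have M: "mat d d (\<lambda>(i, j). if i = j then complex_of_real (Re (D $$ (i, i)) powr t) else 0)
      = dmat d (\<lambda>i. Re (D $$ (i, i)) powr t)" for D
    by (simp add: dmat_def)
  show ?thesis
    unfolding mpow_def dX M
  proof (rule the_equality)
    show "\<exists>Ua D. unitary_mat d Ua \<and> D \<in> carrier_mat d d \<and> diagonal_mat D \<and>
          (\<forall>i<d. Im (D $$ (i, i)) = 0 \<and> 0 < Re (D $$ (i, i))) \<and> X = Ua * D * mat_adjoint Ua \<and>
          U * dmat d (\<lambda>i. f i powr t) * mat_adjoint U = Ua * dmat d (\<lambda>i. Re (D $$ (i, i)) powr t) * mat_adjoint Ua"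
    proof (intro exI conjI)
      show "diagonal_mat (dmat d f)" by (simp add: diagonal_mat_def)
      show "\<forall>i<d. Im (dmat d f $$ (i, i)) = 0 \<and> 0 < Re (dmat d f $$ (i, i))" using f by simp
      show "U * dmat d (\<lambda>i. f i powr t) * mat_adjoint U = U * dmat d (\<lambda>i. Re (dmat d f $$ (i, i)) powr t) * mat_adjoint U"
        by (subst dmat_cong[of d "\<lambda>i. Re (dmat d f $$ (i, i)) powr t" "\<lambda>i. f i powr t"], simp_all)
    qed (insert U X, simp_all)
  next
    fix B assume "\<exists>Ua D. unitary_mat d Ua \<and> D \<in> carrier_mat d d \<and> diagonal_mat D \<and>
          (\<forall>i<d. Im (D $$ (i, i)) = 0 \<and> 0 < Re (D $$ (i, i))) \<and> X = Ua * D * mat_adjoint Ua \<and>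
          B = Ua * dmat d (\<lambda>i. Re (D $$ (i, i)) powr t) * mat_adjoint Ua"
    then obtain V D where V: "unitary_mat d V" and Dc: "D \<in> carrier_mat d d" and Dd: "diagonal_mat D"
      and Dp: "\<forall>i<d. Im (D $$ (i, i)) = 0 \<and> 0 < Re (D $$ (i, i))" and XV: "X = V * D * mat_adjoint V"
      and B: "B = V * dmat d (\<lambda>i. Re (D $$ (i, i)) powr t) * mat_adjoint V" by blast
    have DD: "D = dmat d (\<lambda>i. Re (D $$ (i, i)))" using diag_eq_dmat[OF Dc Dd] Dp by simp
    have "V * dmat d (\<lambda>i. Re (D $$ (i, i))) * mat_adjoint V = U * dmat d f * mat_adjoint U"
      using XV X DD by simp
    from udec_unique[OF V U this, of "\<lambda>x. x powr t"]
    show "B = U * dmat d (\<lambda>i. f i powr t) * mat_adjoint U" using B by simp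
  qed
qed


definition udec :: "nat \<Rightarrow> complex mat \<Rightarrow> complex mat \<Rightarrow> (nat \<Rightarrow> real) \<Rightarrow> bool" where
  "udec d X U f \<longleftrightarrow> unitary_mat d U \<and> (\<forall>i<d. 0 < f i) \<and> X = U * dmat d f * mat_adjoint U"

definition hasdec :: "nat \<Rightarrow> complex mat \<Rightarrow> bool" where
  "hasdec d X \<longleftrightarrow> (\<exists>U f. udec d X U f)"

lemma udec_carrier: "udec d X U f \<Longrightarrow> X \<in> carrier_mat d d"
  unfolding udec_def unitary_mat_def
  using mult_carrier_mat[OF mult_carrier_mat[OF _ dmat_carrier(1)] adj_carrier] by blast

lemma hasdec_carrier: "hasdec d X \<Longrightarrow> X \<in> carrier_mat d d"
  unfolding hasdec_def using udec_carrier by blast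

lemma udec_mpow_eq: "udec d X U f \<Longrightarrow> mpow X t = U * dmat d (\<lambda>i. f i powr t) * mat_adjoint U"
  unfolding udec_def using mpow_udec by blast

lemma udec_mpow: "udec d X U f \<Longrightarrow> udec d (mpow X t) U (\<lambda>i. f i powr t)"
  using udec_mpow_eq[of d X U f t] unfolding udec_def by fastforce

lemma hasdec_mpow: "hasdec d X \<Longrightarrow> hasdec d (mpow X t)"
  unfolding hasdec_def using udec_mpow by blast

lemma mpow_carrier: "hasdec d X \<Longrightarrow> mpow X t \<in> carrier_mat d d"
  using hasdec_mpow hasdec_carrier by blast

lemma udec_prod:
  assumes U: "unitary_mat d U"
  shows "U * dmat d f * mat_adjoint U * (U * dmat d g * mat_adjoint U) = U * dmat d (\<lambda>i. f i * g i) * mat_adjoint U"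
proof -
  have as: "\<And>X Y Z. X \<in> carrier_mat d d \<Longrightarrow> Y \<in> carrier_mat d d \<Longrightarrow> Z \<in> carrier_mat d d \<Longrightarrow> X * Y * Z = X * (Y * Z)"
    by (rule assoc_mult_mat)
  have mc: "\<And>X Y. X \<in> carrier_mat d d \<Longrightarrow> Y \<in> carrier_mat d d \<Longrightarrow> X * Y \<in> carrier_mat d d"
    by (rule mult_carrier_mat)
  have Uc: "U \<in> carrier_mat d d" and UU: "mat_adjoint U * U = 1\<^sub>m d" using U by (simp_all add: unitary_mat_def)
  have aU: "mat_adjoint U \<in> carrier_mat d d" using Uc by simp
  have c: "\<And>X. X \<in> carrier_mat d d \<Longrightarrow> mat_adjoint U * (U * X) = X"
    using mult_cancel_left[OF aU Uc _ UU] by blast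
  have "U * dmat d f * mat_adjoint U * (U * dmat d g * mat_adjoint U) = U * (dmat d f * dmat d g * mat_adjoint U)"
    using Uc aU by (simp add: as mc c)
  thus ?thesis using Uc aU by (simp add: as mc dmat_mult_dmat)
qed

lemma mpow_add:
  assumes "hasdec d X" shows "mpow X s * mpow X r = mpow X (s + r)"
proof -
  obtain U f where u: "udec d X U f" using assms hasdec_def by blast
  have U: "unitary_mat d U" and f: "\<forall>i<d. 0 < f i" using u udec_def by auto
  show ?thesis unfolding udec_mpow_eq[OF u] udec_prod[OF U]
    by (rule arg_cong[where f="\<lambda>D. U * D * mat_adjoint U"], rule dmat_cong, simp add: f powr_add)
qed

lemma mpow_one:
  assumes "hasdec d X" shows "mpow X 1 = X"
proof -
  obtain U f where u: "udec d X U f" using assms hasdec_def by blast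
  have f: "\<forall>i<d. 0 < f i" and X: "X = U * dmat d f * mat_adjoint U" using u udec_def by auto
  have "mpow X 1 = U * dmat d (\<lambda>i. f i powr 1) * mat_adjoint U" by (rule udec_mpow_eq[OF u])
  also have "\<dots> = X" unfolding X
    by (rule arg_cong[where f="\<lambda>D. U * D * mat_adjoint U"], rule dmat_cong, use f in force)
  finally show ?thesis .
qed

lemma mpow_zero:
  assumes "hasdec d X" shows "mpow X 0 = 1\<^sub>m d"
proof -
  obtain U f where u: "udec d X U f" using assms hasdec_def by blast
  have f: "\<forall>i<d. 0 < f i" and U: "unitary_mat d U" using u udec_def by auto
  have Uc: "U \<in> carrier_mat d d" using U by (simp add: unitary_mat_def)
  have "dmat d (\<lambda>i. f i powr 0) = 1\<^sub>m d" unfolding dmat_one[symmetric]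
    by (rule dmat_cong, use f in fastforce)
  thus ?thesis unfolding udec_mpow_eq[OF u] using U Uc by (simp add: unitary_mat_def right_mult_one_mat)
qed

lemma mpow_mpow:
  assumes "hasdec d X" shows "mpow (mpow X s) r = mpow X (s * r)"
proof -
  obtain U f where u: "udec d X U f" using assms hasdec_def by blast
  have f: "\<forall>i<d. 0 < f i" using u udec_def by auto
  have "mpow (mpow X s) r = U * dmat d (\<lambda>i. (f i powr s) powr r) * mat_adjoint U"
    by (rule udec_mpow_eq[OF udec_mpow[OF u]])
  also have "\<dots> = U * dmat d (\<lambda>i. f i powr (s * r)) * mat_adjoint U"
    by (rule arg_cong[where f="\<lambda>D. U * D * mat_adjoint U"], rule dmat_cong, simp add: f powr_powr)
  also have "\<dots> = mpow X (s * r)" by (rule udec_mpow_eq[OF u, symmetric])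
  finally show ?thesis .
qed

lemma udec_herm: assumes "udec d X U f" shows "mat_adjoint X = X"
proof -
  have U: "U \<in> carrier_mat d d" and X: "X = U * dmat d f * mat_adjoint U"
    using assms unfolding udec_def unitary_mat_def by auto
  have "mat_adjoint (U * dmat d f * mat_adjoint U) = mat_adjoint (mat_adjoint U) * mat_adjoint (U * dmat d f)"
    by (rule adj_mult, use U in simp)
  also have "mat_adjoint (U * dmat d f) = dmat d f * mat_adjoint U"
    by (subst adj_mult, use U in simp_all)
  finally show ?thesis using U X by (simp add: assoc_mult_mat[of U d d _ d _ d])
qed

lemma mpow_herm: "hasdec d X \<Longrightarrow> mat_adjoint (mpow X t) = mpow X t"
  using hasdec_mpow[of d X t] udec_herm unfolding hasdec_def by blast

lemma udec_conj:
  assumes u: "udec d X U f" and K: "unitary_mat d K"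
  shows "udec d (K * X * mat_adjoint K) (K * U) f"
proof -
  have as: "\<And>X Y Z. X \<in> carrier_mat d d \<Longrightarrow> Y \<in> carrier_mat d d \<Longrightarrow> Z \<in> carrier_mat d d \<Longrightarrow> X * Y * Z = X * (Y * Z)"
    by (rule assoc_mult_mat)
  have mc: "\<And>X Y. X \<in> carrier_mat d d \<Longrightarrow> Y \<in> carrier_mat d d \<Longrightarrow> X * Y \<in> carrier_mat d d"
    by (rule mult_carrier_mat)
  have U: "unitary_mat d U" and f: "\<forall>i<d. 0 < f i" and X: "X = U * dmat d f * mat_adjoint U"
    using u udec_def by auto
  have Uc: "U \<in> carrier_mat d d" and Kc: "K \<in> carrier_mat d d" using U K by (simp_all add: unitary_mat_def)
  have "K * X * mat_adjoint K = K * U * dmat d f * mat_adjoint (K * U)"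
    unfolding X using Uc Kc by (simp add: adj_mult as mc)
  thus ?thesis unfolding udec_def using unitary_mult[OF K U] f by simp
qed

lemma mpow_conj:
  assumes "hasdec d X" and K: "unitary_mat d K"
  shows "hasdec d (K * X * mat_adjoint K)" "mpow (K * X * mat_adjoint K) t = K * mpow X t * mat_adjoint K"
proof -
  obtain U f where u: "udec d X U f" using assms hasdec_def by blast
  show "hasdec d (K * X * mat_adjoint K)" using udec_conj[OF u K] hasdec_def by blast
  have as: "\<And>X Y Z. X \<in> carrier_mat d d \<Longrightarrow> Y \<in> carrier_mat d d \<Longrightarrow> Z \<in> carrier_mat d d \<Longrightarrow> X * Y * Z = X * (Y * Z)"
    by (rule assoc_mult_mat)
  have mc: "\<And>X Y. X \<in> carrier_mat d d \<Longrightarrow> Y \<in> carrier_mat d d \<Longrightarrow> X * Y \<in> carrier_mat d d"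
    by (rule mult_carrier_mat)
  have Uc: "U \<in> carrier_mat d d" and Kc: "K \<in> carrier_mat d d" using u K by (simp_all add: unitary_mat_def udec_def)
  show "mpow (K * X * mat_adjoint K) t = K * mpow X t * mat_adjoint K"
    unfolding udec_mpow_eq[OF udec_conj[OF u K]] udec_mpow_eq[OF u] using Uc Kc
    by (simp add: adj_mult as mc)
qed

lemma minv_eq:
  assumes X: "X \<in> carrier_mat n n" and Y: "Y \<in> carrier_mat n n" and XY: "X * Y = 1\<^sub>m n"
  shows "minv X = Y"
proof -
  have dX: "dim_row X = n" using X by simp
  have YX: "Y * X = 1\<^sub>m n" using mat_mult_left_right_inverse[OF X Y XY] .
  show ?thesis unfolding minv_def dX
  proof (rule the_equality)
    show "Y \<in> carrier_mat n n \<and> X * Y = 1\<^sub>m n \<and> Y * X = 1\<^sub>m n" using Y XY YX by simp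
  next
    fix B assume B: "B \<in> carrier_mat n n \<and> X * B = 1\<^sub>m n \<and> B * X = 1\<^sub>m n"
    have "B = B * (X * Y)" using B right_mult_one_mat[of B n n] by (simp add: XY)
    also have "\<dots> = (B * X) * Y" using B by (intro assoc_mult_mat[symmetric, OF _ X Y, of _ n], simp)
    also have "\<dots> = Y" using B left_mult_one_mat[OF Y] by (simp del: assoc_mult_mat)
    finally show "B = Y" .
  qed
qed

lemma minv_mpow: "hasdec d X \<Longrightarrow> minv X = mpow X (-1)"
  using minv_eq[OF hasdec_carrier mpow_carrier] mpow_add[of d X 1 "-1"] mpow_one[of d X] mpow_zero[of d X]
  by auto


lemma cprod_smult:
  fixes w w' :: "complex vec"
  assumes "w \<in> carrier_vec m" "w' \<in> carrier_vec m"
  shows "(a \<cdot>\<^sub>v w) \<bullet>c (b \<cdot>\<^sub>v w') = a * cnj b * (w \<bullet>c w')"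
proof -
  have "conjugate (b \<cdot>\<^sub>v w') = cnj b \<cdot>\<^sub>v conjugate w'" by (simp add: conjugate_smult_vec)
  then show ?thesis using assms
    by (simp add: smult_scalar_prod_distrib[of _ m] scalar_prod_smult_distrib[of _ m])
qed

lemma cprod_self_real:
  fixes w :: "complex vec"
  shows "w \<bullet>c w = complex_of_real (Re (w \<bullet>c w))" "0 \<le> Re (w \<bullet>c w)"
proof -
  have "w \<bullet>c w \<ge> 0" by (rule conjugate_square_ge_0_vec)
  then show "w \<bullet>c w = complex_of_real (Re (w \<bullet>c w))" "0 \<le> Re (w \<bullet>c w)"
    by (simp_all add: less_eq_complex_def complex_eq_iff)
qed

lemma nf_aux:
  assumes "z = complex_of_real r" "0 < r"
  shows "(1 / complex_of_real (sqrt r)) * cnj (1 / complex_of_real (sqrt r)) * z = 1"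
proof -
  have s: "complex_of_real (sqrt r) * complex_of_real (sqrt r) = complex_of_real r"
    by (simp only: of_real_mult[symmetric] real_sqrt_mult_self abs_of_pos[OF assms(2)])
  have c0: "complex_of_real (sqrt r) \<noteq> 0" using assms(2) by simp
  show ?thesis unfolding assms(1) using c0 s by (simp add: field_simps)
qed

lemma orthonormal_completion:
  fixes v :: "complex vec"
  assumes v: "v \<in> carrier_vec m" and v0: "v \<noteq> 0\<^sub>v m"
  shows "\<exists>W k. unitary_mat m W \<and> col W 0 = k \<cdot>\<^sub>v v"
proof -
  interpret cof_vec_space m "TYPE(complex)" .
  define b where "b = basis_completion v"
  have b: "set b \<subseteq> carrier_vec m" "distinct b" "\<not> lin_dep (set b)" "length b = m" "hd b = v"
    using basis_completion[OF v v0] unfolding b_def by blast+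
  have m0: "m \<noteq> 0" using v v0 by (cases m, auto)
  then obtain vs where bv: "b = v # vs" using b(4,5) by (cases b, auto)
  define ws where "ws = gram_schmidt m b"
  have ws: "corthogonal ws" "set ws \<subseteq> carrier_vec m" "length ws = m"
    using gram_schmidt_result[OF b(1,2,3) ws_def] b(4) by auto
  have hws: "ws ! 0 = v" using gram_schmidt_hd[OF v, of vs] bv ws(3) m0 unfolding ws_def
    by (cases "gram_schmidt m (v # vs)", auto)
  define nf where "nf w = 1 / complex_of_real (sqrt (Re (w \<bullet>c w)))" for w :: "complex vec"
  define us where "us = map (\<lambda>w. nf w \<cdot>\<^sub>v w) ws"
  define W where "W = mat_of_cols m us"
  have lus: "length us = m" unfolding us_def using ws by simp
  have usc: "\<And>i. i < m \<Longrightarrow> us ! i \<in> carrier_vec m" unfolding us_def using ws by auto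
  have wsc: "\<And>i. i < m \<Longrightarrow> ws ! i \<in> carrier_vec m" using ws by auto
  have Wc: "W \<in> carrier_mat m m" unfolding W_def using lus mat_of_cols_carrier(1)[of m us] by metis
  have orth: "us ! j \<bullet>c us ! i = (if i = j then 1 else 0)" if ij: "i < m" "j < m" for i j
  proof -
    have e: "us ! j \<bullet>c us ! i = nf (ws ! j) * cnj (nf (ws ! i)) * (ws ! j \<bullet>c ws ! i)"
      unfolding us_def using ij ws(3) wsc by (simp add: cprod_smult[of _ m])
    show ?thesis
    proof (cases "i = j")
      case False
      then have "ws ! j \<bullet>c ws ! i = 0" using ws(1) ij ws(3) by (simp add: corthogonal_def)
      thus ?thesis using e False by simp
    next
      case True
      let ?r = "Re (ws ! i \<bullet>c ws ! i)"
      have nz: "ws ! i \<bullet>c ws ! i \<noteq> 0" using ws(1) ij ws(3) by (simp add: corthogonal_def)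
      have r: "ws ! i \<bullet>c ws ! i = complex_of_real ?r" "0 \<le> ?r" by (rule cprod_self_real)+
      have rp: "0 < ?r"
      proof (rule ccontr)
        assume "\<not> 0 < ?r"
        then have "?r = 0" using r(2) by linarith
        then show False using r(1) nz by simp
      qed
      have "nf (ws ! i) * cnj (nf (ws ! i)) * (ws ! i \<bullet>c ws ! i) = 1"
        unfolding nf_def by (rule nf_aux[OF r(1) rp])
      then show ?thesis using e True by simp
    qed
  qed
  have WW: "mat_adjoint W * W = 1\<^sub>m m"
  proof (rule eq_matI)
    fix i j assume "i < dim_row (1\<^sub>m m)" "j < dim_col (1\<^sub>m m)"
    then have ij: "i < m" "j < m" by simp_all
    have "(mat_adjoint W * W) $$ (i, j) = (\<Sum>k<m. cnj (W $$ (k,i)) * W $$ (k,j))"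
      using ij Wc by simp
    also have "\<dots> = (\<Sum>k<m. us ! j $ k * conjugate (us ! i) $ k)"
      unfolding W_def using ij lus usc[OF ij(1)] usc[OF ij(2)]
      by (intro sum.cong refl, simp add: mat_of_cols_index mult.commute)
    also have "\<dots> = us ! j \<bullet>c us ! i"
      unfolding scalar_prod_def using usc[OF ij(1)] by (simp add: atLeast0LessThan)
    also have "\<dots> = 1\<^sub>m m $$ (i, j)" using orth[OF ij] ij by simp
    finally show "(mat_adjoint W * W) $$ (i, j) = 1\<^sub>m m $$ (i, j)" .
  qed (insert Wc, simp_all)
  have WW2: "W * mat_adjoint W = 1\<^sub>m m"
    using mat_mult_left_right_inverse[OF adj_carrier[OF Wc] Wc WW] .
  have "col W 0 = us ! 0" unfolding W_def using lus usc m0 by simp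
  also have "\<dots> = nf v \<cdot>\<^sub>v v" unfolding us_def using hws ws(3) m0 by simp
  finally show ?thesis using Wc WW WW2 unfolding unitary_mat_def by blast
qed


definition ext1 :: "complex \<Rightarrow> complex mat \<Rightarrow> complex mat" where
  "ext1 a M = mat (Suc (dim_row M)) (Suc (dim_col M))
     (\<lambda>(i,j). if i = 0 then (if j = 0 then a else 0) else if j = 0 then 0 else M $$ (i - 1, j - 1))"

lemma ext1_dim[simp]: "dim_row (ext1 a M) = Suc (dim_row M)" "dim_col (ext1 a M) = Suc (dim_col M)"
  by (simp_all add: ext1_def)

lemma ext1_carrier: "M \<in> carrier_mat n m \<Longrightarrow> ext1 a M \<in> carrier_mat (Suc n) (Suc m)"
  unfolding carrier_mat_def by simp

lemma ext1_index[simp]: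
  "ext1 a M $$ (0,0) = a"
  "j < dim_col M \<Longrightarrow> ext1 a M $$ (0, Suc j) = 0"
  "i < dim_row M \<Longrightarrow> ext1 a M $$ (Suc i, 0) = 0"
  "i < dim_row M \<Longrightarrow> j < dim_col M \<Longrightarrow> ext1 a M $$ (Suc i, Suc j) = M $$ (i, j)"
  by (simp_all add: ext1_def)

lemma ext1_mult:
  assumes "dim_col M = dim_row N"
  shows "ext1 a M * ext1 b N = ext1 (a * b) (M * N)"
proof (rule eq_matI)
  fix i j assume ij: "i < dim_row (ext1 (a * b) (M * N))" "j < dim_col (ext1 (a * b) (M * N))"
  have "(ext1 a M * ext1 b N) $$ (i, j) = (\<Sum>k<Suc (dim_col M). ext1 a M $$ (i,k) * ext1 b N $$ (k,j))"
    using ij assms by simp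
  also have "\<dots> = ext1 a M $$ (i,0) * ext1 b N $$ (0,j) + (\<Sum>k<dim_col M. ext1 a M $$ (i,Suc k) * ext1 b N $$ (Suc k,j))"
    by (rule sum.lessThan_Suc_shift)
  also have "\<dots> = ext1 (a * b) (M * N) $$ (i, j)"
  proof (cases i)
    case 0
    then show ?thesis
    proof (cases j)
      case 0 thus ?thesis using \<open>i = 0\<close> by simp
    next
      case (Suc j') thus ?thesis using \<open>i = 0\<close> ij assms by simp
    qed
  next
    case (Suc i')
    then show ?thesis
    proof (cases j)
      case 0 thus ?thesis using \<open>i = Suc i'\<close> ij assms by simp
    next
      case (Suc j')
      have "(\<Sum>k<dim_col M. ext1 a M $$ (i,Suc k) * ext1 b N $$ (Suc k,j)) = (\<Sum>k<dim_col M. M $$ (i',k) * N $$ (k,j'))"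
        using \<open>i = Suc i'\<close> Suc ij assms by (intro sum.cong refl, simp)
      thus ?thesis using \<open>i = Suc i'\<close> Suc ij assms by simp
    qed
  qed
  finally show "(ext1 a M * ext1 b N) $$ (i, j) = ext1 (a * b) (M * N) $$ (i, j)" .
qed simp_all

lemma ext1_adj: "mat_adjoint (ext1 a M) = ext1 (cnj a) (mat_adjoint M)"
proof (rule eq_matI)
  fix i j assume ij: "i < dim_row (ext1 (cnj a) (mat_adjoint M))" "j < dim_col (ext1 (cnj a) (mat_adjoint M))"
  show "mat_adjoint (ext1 a M) $$ (i, j) = ext1 (cnj a) (mat_adjoint M) $$ (i, j)"
    using ij by (cases i; cases j; simp)
qed simp_all

lemma ext1_one: "ext1 1 (1\<^sub>m n) = 1\<^sub>m (Suc n)"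
proof (rule eq_matI)
  fix i j assume ij: "i < dim_row (1\<^sub>m (Suc n) :: complex mat)" "j < dim_col (1\<^sub>m (Suc n) :: complex mat)"
  show "ext1 1 (1\<^sub>m n) $$ (i, j) = 1\<^sub>m (Suc n) $$ (i, j)"
    using ij by (cases i; cases j; simp)
qed simp_all

lemma ext1_dmat: "ext1 (complex_of_real r) (dmat n c) = dmat (Suc n) (\<lambda>i. if i = 0 then r else c (i - 1))"
proof (rule eq_matI)
  fix i j assume ij: "i < dim_row (dmat (Suc n) (\<lambda>i. if i = 0 then r else c (i - 1)))"
     "j < dim_col (dmat (Suc n) (\<lambda>i. if i = 0 then r else c (i - 1)))"
  show "ext1 (complex_of_real r) (dmat n c) $$ (i, j) = dmat (Suc n) (\<lambda>i. if i = 0 then r else c (i - 1)) $$ (i, j)"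
    using ij by (cases i; cases j; simp)
qed simp_all

lemma ext1_unitary:
  assumes "unitary_mat n V" shows "unitary_mat (Suc n) (ext1 1 V)"
proof -
  have V: "V \<in> carrier_mat n n" "V * mat_adjoint V = 1\<^sub>m n" "mat_adjoint V * V = 1\<^sub>m n"
    using assms unfolding unitary_mat_def by auto
  have "ext1 1 V * mat_adjoint (ext1 1 V) = 1\<^sub>m (Suc n)"
    unfolding ext1_adj using V by (simp add: ext1_mult ext1_one)
  moreover have "mat_adjoint (ext1 1 V) * ext1 1 V = 1\<^sub>m (Suc n)"
    unfolding ext1_adj using V by (simp add: ext1_mult ext1_one)
  ultimately show ?thesis unfolding unitary_mat_def using ext1_carrier[OF V(1)] by simp
qed


lemma herm_spectral:
  fixes A :: "complex mat"
  assumes "A \<in> carrier_mat n n" "mat_adjoint A = A"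
  shows "\<exists>U c. unitary_mat n U \<and> A = U * dmat n c * mat_adjoint U"
  using assms
proof (induction n arbitrary: A)
  case 0
  have "A = 1\<^sub>m 0 * dmat 0 (\<lambda>_. 0) * mat_adjoint (1\<^sub>m 0)"
    by (rule eq_matI, insert "0.prems"(1), simp_all)
  moreover have "unitary_mat 0 (1\<^sub>m 0)" unfolding unitary_mat_def by simp
  ultimately show ?case by blast
next
  case (Suc n A)
  have A: "A \<in> carrier_mat (Suc n) (Suc n)" and Ah: "mat_adjoint A = A" using Suc.prems by auto
  have as: "\<And>X Y Z. X \<in> carrier_mat (Suc n) (Suc n) \<Longrightarrow> Y \<in> carrier_mat (Suc n) (Suc n) \<Longrightarrow> Z \<in> carrier_mat (Suc n) (Suc n) \<Longrightarrow> X * Y * Z = X * (Y * Z)"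
    by (rule assoc_mult_mat)
  have mc: "\<And>X Y. X \<in> carrier_mat (Suc n) (Suc n) \<Longrightarrow> Y \<in> carrier_mat (Suc n) (Suc n) \<Longrightarrow> X * Y \<in> carrier_mat (Suc n) (Suc n)"
    by (rule mult_carrier_mat)
  from spectrum_non_empty[OF A] obtain e where "eigenvalue A e" unfolding spectrum_def by auto
  then obtain v where ev: "eigenvector A v e" unfolding eigenvalue_def by blast
  have v: "v \<in> carrier_vec (Suc n)" "v \<noteq> 0\<^sub>v (Suc n)" "A *\<^sub>v v = e \<cdot>\<^sub>v v"
    using ev A unfolding eigenvector_def by auto
  obtain W k where W: "unitary_mat (Suc n) W" and Wcol: "col W 0 = k \<cdot>\<^sub>v v"
    using orthonormal_completion[OF v(1,2)] by blast
  have Wc: "W \<in> carrier_mat (Suc n) (Suc n)" and WW: "W * mat_adjoint W = 1\<^sub>m (Suc n)"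
    "mat_adjoint W * W = 1\<^sub>m (Suc n)" using W unfolding unitary_mat_def by auto
  have aW: "mat_adjoint W \<in> carrier_mat (Suc n) (Suc n)" using Wc by simp
  define A' where "A' = mat_adjoint W * A * W"
  have A'c: "A' \<in> carrier_mat (Suc n) (Suc n)" unfolding A'_def using A Wc aW by (simp add: mc)
  have A'h: "mat_adjoint A' = A'"
  proof -
    have "mat_adjoint A' = mat_adjoint W * mat_adjoint (mat_adjoint W * A)"
      unfolding A'_def by (rule adj_mult, use A Wc in simp)
    also have "mat_adjoint (mat_adjoint W * A) = mat_adjoint A * W"
      by (subst adj_mult, use A Wc in simp_all)
    finally show ?thesis unfolding A'_def Ah using A Wc aW by (simp add: as)
  qed
  have colA: "A *\<^sub>v col W 0 = e \<cdot>\<^sub>v col W 0"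
    unfolding Wcol using v A by (simp add: mult_mat_vec[of _ "Suc n" "Suc n"] smult_smult_assoc mult.commute)
  have cW: "col W 0 \<in> carrier_vec (Suc n)" using col_carrier_vec[OF _ Wc, of 0] by simp
  have "col A' 0 = mat_adjoint W *\<^sub>v (A *\<^sub>v col W 0)"
    unfolding A'_def using col_mult2[OF mult_carrier_mat[OF aW A] Wc, of 0] assoc_mult_mat_vec[OF aW A cW] by simp
  also have "\<dots> = e \<cdot>\<^sub>v (mat_adjoint W *\<^sub>v col W 0)"
    unfolding colA by (rule mult_mat_vec[OF aW cW])
  also have "mat_adjoint W *\<^sub>v col W 0 = col (mat_adjoint W * W) 0"
    using col_mult2[OF aW Wc, of 0] by simp
  finally have colA': "col A' 0 = e \<cdot>\<^sub>v unit_vec (Suc n) 0" unfolding WW by simp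
  have A'i0: "A' $$ (i, 0) = (if i = 0 then e else 0)" if "i < Suc n" for i
    using arg_cong[OF colA', of "\<lambda>x. x $ i"] that A'c by simp
  have A'0j: "A' $$ (0, j) = cnj (A' $$ (j, 0))" if "j < Suc n" for j
  proof -
    have "A' $$ (0, j) = mat_adjoint A' $$ (0, j)" using A'h by simp
    also have "\<dots> = cnj (A' $$ (j, 0))" using that A'c by simp
    finally show ?thesis .
  qed
  have er: "e = complex_of_real (Re e)"
    using A'0j[of 0] A'i0[of 0] by (simp add: complex_eq_iff)
  define B where "B = mat n n (\<lambda>(i,j). A' $$ (Suc i, Suc j))"
  have Bc: "B \<in> carrier_mat n n" unfolding B_def by simp
  have Bh: "mat_adjoint B = B"
  proof (rule eq_matI)
    fix i j assume "i < dim_row B" "j < dim_col B"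
    then have ij: "i < n" "j < n" using Bc by simp_all
    have "mat_adjoint B $$ (i, j) = cnj (A' $$ (Suc j, Suc i))" using ij unfolding B_def by simp
    also have "\<dots> = mat_adjoint A' $$ (Suc i, Suc j)" using ij A'c by simp
    finally show "mat_adjoint B $$ (i, j) = B $$ (i, j)" unfolding A'h using ij B_def by simp
  qed (insert Bc, simp_all)
  obtain V c where V: "unitary_mat n V" and BV: "B = V * dmat n c * mat_adjoint V"
    using Suc.IH[OF Bc Bh] by blast
  have Vc: "V \<in> carrier_mat n n" using V unfolding unitary_mat_def by simp
  have A'B: "A' = ext1 e B"
  proof (rule eq_matI)
    fix i j assume "i < dim_row (ext1 e B)" "j < dim_col (ext1 e B)"
    then have ij: "i < Suc n" "j < Suc n" using Bc by simp_all
    show "A' $$ (i, j) = ext1 e B $$ (i, j)"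
    proof (cases i)
      case 0
      then show ?thesis
      proof (cases j)
        case 0 thus ?thesis using \<open>i = 0\<close> A'i0[of 0] by simp
      next
        case (Suc j') thus ?thesis using \<open>i = 0\<close> A'0j[OF ij(2)] A'i0[OF ij(2)] ij Bc by simp
      qed
    next
      case (Suc i')
      then show ?thesis
      proof (cases j)
        case 0 thus ?thesis using \<open>i = Suc i'\<close> A'i0[OF ij(1)] ij Bc by simp
      next
        case (Suc j') thus ?thesis using \<open>i = Suc i'\<close> ij Bc unfolding B_def by simp
      qed
    qed
  qed (insert A'c Bc, simp_all)
  define c' where "c' = (\<lambda>i. if i = 0 then Re e else c (i - 1))"
  define E where "E = ext1 1 V"
  have E: "unitary_mat (Suc n) E" unfolding E_def by (rule ext1_unitary[OF V])
  have Ec: "E \<in> carrier_mat (Suc n) (Suc n)" using E unfolding unitary_mat_def by simp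
  have "A' = ext1 (1 * complex_of_real (Re e) * 1) (V * dmat n c * mat_adjoint V)"
    unfolding A'B BV using er by simp
  also have "\<dots> = E * ext1 (complex_of_real (Re e)) (dmat n c) * mat_adjoint E"
    unfolding E_def ext1_adj using Vc by (simp add: ext1_mult)
  finally have A'E: "A' = E * dmat (Suc n) c' * mat_adjoint E" unfolding ext1_dmat c'_def .
  have "A = W * A' * mat_adjoint W"
  proof -
    have "W * A' * mat_adjoint W = (W * mat_adjoint W) * A * (W * mat_adjoint W)"
      unfolding A'_def using A Wc aW by (simp add: as mc)
    thus ?thesis unfolding WW using A by simp
  qed
  also have "\<dots> = (W * E) * dmat (Suc n) c' * mat_adjoint (W * E)"
    unfolding A'E using Wc Ec by (simp add: as mc adj_mult)
  finally show ?case using unitary_mult[OF W E] by blast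
qed


lemma mult_vec_index:
  "i < dim_row A \<Longrightarrow> dim_vec v = dim_col A \<Longrightarrow> (A *\<^sub>v v) $ i = (\<Sum>j<dim_col A. A $$ (i,j) * v $ j)"
  by (simp add: scalar_prod_def atLeast0LessThan)

lemma quad_adj:
  fixes S :: "complex mat"
  assumes S: "S \<in> carrier_mat m n" and v: "v \<in> carrier_vec n" and w: "w \<in> carrier_vec m"
  shows "conjugate v \<bullet> (mat_adjoint S *\<^sub>v w) = conjugate (S *\<^sub>v v) \<bullet> w"
proof -
  have "conjugate v \<bullet> (mat_adjoint S *\<^sub>v w) = (\<Sum>i<n. conjugate v $ i * (mat_adjoint S *\<^sub>v w) $ i)"
    unfolding scalar_prod_def using S by (simp add: atLeast0LessThan)
  also have "\<dots> = (\<Sum>i<n. cnj (v $ i) * (\<Sum>k<m. cnj (S $$ (k,i)) * w $ k))"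
    by (rule sum.cong[OF refl], use S v w in \<open>simp add: mult_vec_index del: index_mult_mat_vec\<close>)
  also have "\<dots> = (\<Sum>i<n. \<Sum>k<m. cnj (S $$ (k,i)) * cnj (v $ i) * w $ k)"
    by (simp add: sum_distrib_left ac_simps)
  also have "\<dots> = (\<Sum>k<m. \<Sum>i<n. cnj (S $$ (k,i)) * cnj (v $ i) * w $ k)"
    by (rule sum.swap)
  also have "\<dots> = (\<Sum>k<m. cnj (\<Sum>i<n. S $$ (k,i) * v $ i) * w $ k)"
    by (simp add: cnj_sum sum_distrib_right)
  also have "\<dots> = (\<Sum>k<m. conjugate (S *\<^sub>v v) $ k * w $ k)"
    by (rule sum.cong[OF refl], use S v w in \<open>simp add: mult_vec_index del: index_mult_mat_vec\<close>)
  also have "\<dots> = conjugate (S *\<^sub>v v) \<bullet> w"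
    unfolding scalar_prod_def using w by (simp add: atLeast0LessThan)
  finally show ?thesis .
qed

lemma posdef_congr:
  assumes X: "posdef d X" and S: "S \<in> carrier_mat d d" and Si: "Si \<in> carrier_mat d d"
    and SSi: "S * Si = 1\<^sub>m d"
  shows "posdef d (mat_adjoint S * X * S)"
proof -
  have Xc: "X \<in> carrier_mat d d" and Xh: "mat_adjoint X = X"
    and Xp: "\<And>v. v \<in> carrier_vec d \<Longrightarrow> v \<noteq> 0\<^sub>v d \<Longrightarrow> 0 < Re (conjugate v \<bullet> (X *\<^sub>v v))"
    using X unfolding posdef_def by auto
  have aS: "mat_adjoint S \<in> carrier_mat d d" using S by simp
  have SiS: "Si * S = 1\<^sub>m d" using mat_mult_left_right_inverse[OF S Si SSi] .
  have c: "mat_adjoint S * X * S \<in> carrier_mat d d" using mult_carrier_mat[OF mult_carrier_mat[OF aS Xc] S] .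
  have h: "mat_adjoint (mat_adjoint S * X * S) = mat_adjoint S * X * S"
  proof -
    have "mat_adjoint (mat_adjoint S * X * S) = mat_adjoint S * mat_adjoint (mat_adjoint S * X)"
      by (rule adj_mult, use aS Xc S in simp)
    also have "mat_adjoint (mat_adjoint S * X) = X * S"
      by (subst adj_mult, use aS Xc S Xh in simp_all)
    finally show ?thesis using aS Xc S assoc_mult_mat[OF aS Xc S] by simp
  qed
  have p: "0 < Re (conjugate v \<bullet> ((mat_adjoint S * X * S) *\<^sub>v v))"
    if v: "v \<in> carrier_vec d" "v \<noteq> 0\<^sub>v d" for v
  proof -
    have Sv: "S *\<^sub>v v \<in> carrier_vec d" using S v by simp
    have XSv: "X *\<^sub>v (S *\<^sub>v v) \<in> carrier_vec d" using Xc Sv by simp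
    have Sv0: "S *\<^sub>v v \<noteq> 0\<^sub>v d"
    proof
      assume "S *\<^sub>v v = 0\<^sub>v d"
      then have "Si *\<^sub>v (S *\<^sub>v v) = 0\<^sub>v d" using Si by (intro eq_vecI, simp_all add: scalar_prod_def)
      moreover have "Si *\<^sub>v (S *\<^sub>v v) = v"
        using assoc_mult_mat_vec[OF Si S v(1), symmetric] SiS v by simp
      ultimately show False using v by simp
    qed
    have "(mat_adjoint S * X * S) *\<^sub>v v = (mat_adjoint S * X) *\<^sub>v (S *\<^sub>v v)"
      by (rule assoc_mult_mat_vec[OF mult_carrier_mat[OF aS Xc] S v(1)])
    also have "\<dots> = mat_adjoint S *\<^sub>v (X *\<^sub>v (S *\<^sub>v v))"
      by (rule assoc_mult_mat_vec[OF aS Xc Sv])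
    finally have "(mat_adjoint S * X * S) *\<^sub>v v = mat_adjoint S *\<^sub>v (X *\<^sub>v (S *\<^sub>v v))" .
    then have "conjugate v \<bullet> ((mat_adjoint S * X * S) *\<^sub>v v) = conjugate (S *\<^sub>v v) \<bullet> (X *\<^sub>v (S *\<^sub>v v))"
      using quad_adj[OF S v(1) XSv] by simp
    thus ?thesis using Xp[OF Sv Sv0] by simp
  qed
  show ?thesis unfolding posdef_def using c h p by blast
qed

lemma aux_sq: "cnj a * (complex_of_real r * a) = complex_of_real (r * (cmod a)\<^sup>2)"
proof -
  have "complex_of_real (r * (cmod a)\<^sup>2) = complex_of_real r * complex_of_real ((cmod a)\<^sup>2)"
    by (rule of_real_mult)
  also have "complex_of_real ((cmod a)\<^sup>2) = a * cnj a" by (rule complex_norm_square)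
  finally show ?thesis by (metis mult.assoc mult.commute)
qed

lemma posdef_dmat:
  assumes f: "\<And>i. i < d \<Longrightarrow> 0 < f i"
  shows "posdef d (dmat d f)"
proof -
  have p: "0 < Re (conjugate v \<bullet> (dmat d f *\<^sub>v v))" if v: "v \<in> carrier_vec d" "v \<noteq> 0\<^sub>v d" for v
  proof -
    obtain j where j: "j < d" "v $ j \<noteq> 0"
      using v by (metis eq_vecI carrier_vecD index_zero_vec(1) index_zero_vec(2))
    have e: "conjugate v \<bullet> (dmat d f *\<^sub>v v) = (\<Sum>i<d. complex_of_real (f i * (cmod (v $ i))\<^sup>2))"
    proof -
      have "conjugate v \<bullet> (dmat d f *\<^sub>v v) = (\<Sum>i<d. conjugate v $ i * (dmat d f *\<^sub>v v) $ i)"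
        unfolding scalar_prod_def by (simp add: atLeast0LessThan)
      also have "\<dots> = (\<Sum>i<d. cnj (v $ i) * (complex_of_real (f i) * v $ i))"
        by (rule sum.cong[OF refl], use v in \<open>simp add: mult_vec_index if_distrib[where f="\<lambda>x. x * _"] sum.delta del: index_mult_mat_vec cong: if_cong\<close>)
      also have "\<dots> = (\<Sum>i<d. complex_of_real (f i * (cmod (v $ i))\<^sup>2))"
        by (intro sum.cong refl, rule aux_sq)
      finally show ?thesis .
    qed
    have nn: "0 \<le> f i * (cmod (v $ i))\<^sup>2" if "i < d" for i using f[OF that] by simp
    have pj: "0 < f j * (cmod (v $ j))\<^sup>2" using f[OF j(1)] j(2) by simp
    have "0 < (\<Sum>i<d. f i * (cmod (v $ i))\<^sup>2)"
      by (rule sum_pos2[of _ j], use j nn pj in simp_all)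
    thus ?thesis unfolding e by simp
  qed
  show ?thesis unfolding posdef_def using p by simp
qed

lemma udec_posdef:
  assumes "udec d X U f" shows "posdef d X"
proof -
  have U: "U \<in> carrier_mat d d" "U * mat_adjoint U = 1\<^sub>m d" "mat_adjoint U * U = 1\<^sub>m d"
    and f: "\<forall>i<d. 0 < f i" and X: "X = U * dmat d f * mat_adjoint U"
    using assms unfolding udec_def unitary_mat_def by auto
  have "posdef d (mat_adjoint (mat_adjoint U) * dmat d f * mat_adjoint U)"
    by (rule posdef_congr[OF posdef_dmat adj_carrier[OF U(1)] U(1) U(3)], use f in simp)
  thus ?thesis using X by simp
qed

lemma posdef_hasdec:
  assumes X: "posdef d X" shows "hasdec d X"
proof -
  have Xc: "X \<in> carrier_mat d d" and Xh: "mat_adjoint X = X"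
    and Xp: "\<And>v. v \<in> carrier_vec d \<Longrightarrow> v \<noteq> 0\<^sub>v d \<Longrightarrow> 0 < Re (conjugate v \<bullet> (X *\<^sub>v v))"
    using X unfolding posdef_def by auto
  obtain U c where U: "unitary_mat d U" and XU: "X = U * dmat d c * mat_adjoint U"
    using herm_spectral[OF Xc Xh] by blast
  have Uc: "U \<in> carrier_mat d d" and UU: "mat_adjoint U * U = 1\<^sub>m d" using U unfolding unitary_mat_def by auto
  have aU: "mat_adjoint U \<in> carrier_mat d d" using Uc by simp
  have XUe: "X * U = U * dmat d c"
  proof -
    have "X * U = U * dmat d c * (mat_adjoint U * U)" unfolding XU
      by (rule assoc_mult_mat[of _ d d _ d _ d], use Uc aU in simp_all)
    thus ?thesis unfolding UU using Uc by (simp add: right_mult_one_mat[of _ d d])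
  qed
  have cpos: "0 < c i" if i: "i < d" for i
  proof -
    let ?u = "col U i"
    have uc: "?u \<in> carrier_vec d" using Uc i by simp
    have Xu: "X *\<^sub>v ?u = complex_of_real (c i) \<cdot>\<^sub>v ?u"
    proof -
      have "X *\<^sub>v ?u = col (X * U) i" using col_mult2[OF Xc Uc i] by simp
      also have "\<dots> = col (U * dmat d c) i" unfolding XUe ..
      also have "\<dots> = complex_of_real (c i) \<cdot>\<^sub>v ?u"
        by (rule eq_vecI, use Uc i in \<open>simp_all add: mult_dmat_index del: mprod_index\<close>)
      finally show ?thesis .
    qed
    have nrm: "conjugate ?u \<bullet> ?u = 1"
    proof -
      have "conjugate ?u \<bullet> ?u = (mat_adjoint U * U) $$ (i,i)"
        unfolding scalar_prod_def using Uc i by (simp add: atLeast0LessThan)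
      thus ?thesis unfolding UU using i by simp
    qed
    have u0: "?u \<noteq> 0\<^sub>v d"
    proof
      assume "?u = 0\<^sub>v d" then have "conjugate ?u \<bullet> ?u = 0" by simp
      thus False using nrm by simp
    qed
    have "conjugate ?u \<bullet> (X *\<^sub>v ?u) = complex_of_real (c i)"
      unfolding Xu using uc nrm by (simp add: scalar_prod_smult_distrib[of _ d])
    thus ?thesis using Xp[OF uc u0] by simp
  qed
  show ?thesis unfolding hasdec_def udec_def using U XU cpos by blast
qed


lemma hasdec_posdef: "hasdec d X \<Longrightarrow> posdef d X"
  unfolding hasdec_def using udec_posdef by blast

lemma mpow_add': "hasdec d X \<Longrightarrow> s + r = u \<Longrightarrow> mpow X s * mpow X r = mpow X u"
  using mpow_add by blast

lemma mpow_mpow': "hasdec d X \<Longrightarrow> s * r = u \<Longrightarrow> mpow (mpow X s) r = mpow X u"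
  using mpow_mpow by blast

lemma rassoc:
  fixes X Y Z W :: "complex mat"
  assumes "X \<in> carrier_mat n n" "Y \<in> carrier_mat n n" "Z \<in> carrier_mat n n" "X * Y = W"
  shows "X * (Y * Z) = W * Z"
  using assoc_mult_mat[OF assms(1-3)] assms(4) by simp

lemma mtrace_comm:
  fixes A B :: "complex mat"
  assumes A: "A \<in> carrier_mat n m" and B: "B \<in> carrier_mat m n"
  shows "mtrace (A * B) = mtrace (B * A)"
proof -
  have dims: "dim_row A = n" "dim_col A = m" "dim_row B = m" "dim_col B = n" using A B by auto
  have e: "mtrace (X * Y) = (\<Sum>i<dim_row X. \<Sum>k<dim_col X. X $$ (i,k) * Y $$ (k,i))"
    if "dim_col X = dim_row Y" "dim_col Y = dim_row X" for X Y :: "complex mat"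
    unfolding mtrace_def
  proof (rule sum.cong)
    fix i assume "i \<in> {..<dim_row X}"
    then have i: "i < dim_row X" by simp
    show "(X * Y) $$ (i, i) = (\<Sum>k<dim_col X. X $$ (i, k) * Y $$ (k, i))"
      using mprod_index[of i X i Y] i that by simp
  qed simp
  have "mtrace (A * B) = (\<Sum>i<n. \<Sum>k<m. A $$ (i,k) * B $$ (k,i))"
    using e[of A B] dims by simp
  also have "\<dots> = (\<Sum>k<m. \<Sum>i<n. B $$ (k,i) * A $$ (i,k))"
    by (subst sum.swap, simp add: mult.commute)
  also have "\<dots> = mtrace (B * A)"
    using e[of B A] dims by simp
  finally show ?thesis .
qed

lemma mtrace_unitary_conj:
  assumes K: "unitary_mat d K" and Y: "Y \<in> carrier_mat d d"
  shows "mtrace (K * Y * mat_adjoint K) = mtrace Y"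
proof -
  have Kc: "K \<in> carrier_mat d d" and KK: "mat_adjoint K * K = 1\<^sub>m d" using K unfolding unitary_mat_def by auto
  have aK: "mat_adjoint K \<in> carrier_mat d d" using Kc by simp
  have "mtrace (K * Y * mat_adjoint K) = mtrace (mat_adjoint K * (K * Y))"
    by (rule mtrace_comm[OF mult_carrier_mat[OF Kc Y] aK])
  also have "mat_adjoint K * (K * Y) = Y" using rassoc[OF aK Kc Y KK] Y by simp
  finally show ?thesis .
qed


theorem mainTheorem9:
  fixes P Q R :: "complex mat" and d :: nat and t :: real
  assumes "posdef d P" and "posdef d Q"
    and "0 \<le> t" and "t \<le> 1"
    and "R = ai_geodesic (minv P) (minv Q) t"
  shows "gen_fidelity R P Q = matsumoto_fidelity P Q"
proof -
  have as: "\<And>X Y Z :: complex mat. X \<in> carrier_mat d d \<Longrightarrow> Y \<in> carrier_mat d d \<Longrightarrow> Z \<in> carrier_mat d d \<Longrightarrow> X * Y * Z = X * (Y * Z)"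
    by (rule assoc_mult_mat)
  have mc: "\<And>X Y :: complex mat. X \<in> carrier_mat d d \<Longrightarrow> Y \<in> carrier_mat d d \<Longrightarrow> X * Y \<in> carrier_mat d d"
    by (rule mult_carrier_mat)
  have one_l: "\<And>Z :: complex mat. Z \<in> carrier_mat d d \<Longrightarrow> 1\<^sub>m d * Z = Z" by (rule left_mult_one_mat)
  have one_r: "\<And>Z :: complex mat. Z \<in> carrier_mat d d \<Longrightarrow> Z * 1\<^sub>m d = Z" by (rule right_mult_one_mat)
  have hP: "hasdec d P" using assms(1) posdef_hasdec by blast
  have hQ: "hasdec d Q" using assms(2) posdef_hasdec by blast
  have Pc: "P \<in> carrier_mat d d" using hasdec_carrier[OF hP] .
  have Qc: "Q \<in> carrier_mat d d" using hasdec_carrier[OF hQ] .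
  define A where "A = minv P"
  define B where "B = minv Q"
  have A_eq: "A = mpow P (-1)" using minv_mpow[OF hP] A_def by simp
  have B_eq: "B = mpow Q (-1)" using minv_mpow[OF hQ] B_def by simp
  have hA: "hasdec d A" using hasdec_mpow[OF hP] A_eq by simp
  have hB: "hasdec d B" using hasdec_mpow[OF hQ] B_eq by simp
  have Bc: "B \<in> carrier_mat d d" using hasdec_carrier[OF hB] .
  define Ah where "Ah = mpow A (1/2)"
  define Aih where "Aih = mpow A (-1/2)"
  have hAh: "hasdec d Ah" unfolding Ah_def by (rule hasdec_mpow[OF hA])
  have hAih: "hasdec d Aih" unfolding Aih_def by (rule hasdec_mpow[OF hA])
  have Ahc: "Ah \<in> carrier_mat d d" using hasdec_carrier[OF hAh] .
  have Aihc: "Aih \<in> carrier_mat d d" using hasdec_carrier[OF hAih] .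
  have Ahh: "mat_adjoint Ah = Ah" unfolding Ah_def by (rule mpow_herm[OF hA])
  have Aihh: "mat_adjoint Aih = Aih" unfolding Aih_def by (rule mpow_herm[OF hA])
  have AhAih: "Ah * Aih = 1\<^sub>m d" unfolding Ah_def Aih_def
    using mpow_add'[OF hA, of "1/2" "-1/2" 0] mpow_zero[OF hA] by simp
  have AihAh: "Aih * Ah = 1\<^sub>m d" unfolding Ah_def Aih_def
    using mpow_add'[OF hA, of "-1/2" "1/2" 0] mpow_zero[OF hA] by simp
  have AihAih: "Aih * Aih = P"
  proof -
    have "Aih * Aih = mpow A (-1)" unfolding Aih_def by (rule mpow_add'[OF hA], simp)
    also have "\<dots> = mpow P 1" unfolding A_eq by (rule mpow_mpow'[OF hP], simp)
    also have "\<dots> = P" by (rule mpow_one[OF hP])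
    finally show ?thesis .
  qed
  have QB: "Q * B = 1\<^sub>m d"
  proof -
    have "mpow Q 1 * mpow Q (-1) = mpow Q 0" by (rule mpow_add'[OF hQ], simp)
    thus ?thesis using mpow_one[OF hQ] mpow_zero[OF hQ] B_eq by simp
  qed
  have BQ: "B * Q = 1\<^sub>m d" using mat_mult_left_right_inverse[OF Qc Bc QB] .
  define C where "C = Aih * B * Aih"
  have pC: "posdef d C"
    using posdef_congr[OF hasdec_posdef[OF hB] Aihc Ahc AihAh] Aihh unfolding C_def by simp
  have hC: "hasdec d C" using posdef_hasdec[OF pC] .
  define Ct where "Ct s = mpow C s" for s
  have hCt: "\<And>s. hasdec d (Ct s)" unfolding Ct_def by (rule hasdec_mpow[OF hC])
  have Ctc: "\<And>s. Ct s \<in> carrier_mat d d" using hasdec_carrier[OF hCt] .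
  have Ctd[simp]: "\<And>s. dim_row (Ct s) = d" "\<And>s. dim_col (Ct s) = d"
    using Ctc carrier_matD by blast+
  have Cth: "\<And>s. mat_adjoint (Ct s) = Ct s" unfolding Ct_def by (rule mpow_herm[OF hC])
  have Ct_add: "\<And>a b c. a + b = c \<Longrightarrow> Ct a * Ct b = Ct c" unfolding Ct_def by (rule mpow_add'[OF hC])
  have Ct0: "Ct 0 = 1\<^sub>m d" unfolding Ct_def by (rule mpow_zero[OF hC])
  define th where "th = t/2"
  define mth where "mth = - (t/2)"
  define mt where "mt = - t"
  define m1 where "m1 = (-1::real)"
  define mh where "mh = - (1/2::real)"
  define tm where "tm = t/2 - 1"
  define tm1 where "tm1 = t - 1"
  define hm where "hm = (t - 1)/2"
  have e1: "Ct th * Ct th = Ct t" by (rule Ct_add, simp add: th_def)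
  have e2: "Ct t * Ct mt = 1\<^sub>m d" using Ct_add[of t mt 0] Ct0 by (simp add: mt_def)
  have e3: "Ct th * Ct mt = Ct mth" by (rule Ct_add, simp add: th_def mt_def mth_def)
  have e4: "Ct mth * Ct th = 1\<^sub>m d" using Ct_add[of mth th 0] Ct0 by (simp add: th_def mth_def)
  have e5: "Ct th * Ct mth = 1\<^sub>m d" using Ct_add[of th mth 0] Ct0 by (simp add: th_def mth_def)
  have e6: "Ct th * Ct m1 = Ct tm" by (rule Ct_add, simp add: th_def m1_def tm_def)
  have e7: "Ct tm * Ct th = Ct tm1" by (rule Ct_add, simp add: th_def tm_def tm1_def)
  have e8: "Ct mth * Ct hm = Ct mh" by (rule Ct_add, simp add: mth_def hm_def mh_def field_simps)
  define R' where "R' = Ah * Ct t * Ah"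
  have RR': "R = R'" unfolding assms(5) R'_def ai_geodesic_def msqrt_def Ct_def C_def Ah_def Aih_def A_def B_def ..
  have pR: "posdef d R'"
    using posdef_congr[OF hasdec_posdef[OF hCt] Ahc Aihc AhAih] Ahh unfolding R'_def by simp
  have hR: "hasdec d R'" using posdef_hasdec[OF pR] .
  have R'c: "R' \<in> carrier_mat d d" using hasdec_carrier[OF hR] .
  define G where "G = mpow R' (1/2)"
  define Gi where "Gi = mpow R' (-1/2)"
  have Gc: "G \<in> carrier_mat d d" unfolding G_def by (rule mpow_carrier[OF hR])
  have Gic: "Gi \<in> carrier_mat d d" unfolding Gi_def by (rule mpow_carrier[OF hR])
  have Gh: "mat_adjoint G = G" unfolding G_def by (rule mpow_herm[OF hR])
  have Gih: "mat_adjoint Gi = Gi" unfolding Gi_def by (rule mpow_herm[OF hR])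
  have GGi: "G * Gi = 1\<^sub>m d" unfolding G_def Gi_def
    using mpow_add'[OF hR, of "1/2" "-1/2" 0] mpow_zero[OF hR] by simp
  have GiG: "Gi * G = 1\<^sub>m d" unfolding G_def Gi_def
    using mpow_add'[OF hR, of "-1/2" "1/2" 0] mpow_zero[OF hR] by simp
  have GG: "G * G = R'" unfolding G_def
    using mpow_add'[OF hR, of "1/2" "1/2" 1] mpow_one[OF hR] by simp
  define Ri where "Ri = Aih * Ct mt * Aih"
  have Ric: "Ri \<in> carrier_mat d d" unfolding Ri_def using Aihc Ctc by (simp add: mc)
  have c_AhAih: "\<And>Z. Z \<in> carrier_mat d d \<Longrightarrow> Ah * (Aih * Z) = 1\<^sub>m d * Z" by (rule rassoc[OF Ahc Aihc _ AhAih])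
  have c_AihAh: "\<And>Z. Z \<in> carrier_mat d d \<Longrightarrow> Aih * (Ah * Z) = 1\<^sub>m d * Z" by (rule rassoc[OF Aihc Ahc _ AihAh])
  have c_AihAih: "\<And>Z. Z \<in> carrier_mat d d \<Longrightarrow> Aih * (Aih * Z) = P * Z" by (rule rassoc[OF Aihc Aihc _ AihAih])
  have c_GGi: "\<And>Z. Z \<in> carrier_mat d d \<Longrightarrow> G * (Gi * Z) = 1\<^sub>m d * Z" by (rule rassoc[OF Gc Gic _ GGi])
  have c_GiG: "\<And>Z. Z \<in> carrier_mat d d \<Longrightarrow> Gi * (G * Z) = 1\<^sub>m d * Z" by (rule rassoc[OF Gic Gc _ GiG])
  have c_e1: "\<And>Z. Z \<in> carrier_mat d d \<Longrightarrow> Ct th * (Ct th * Z) = Ct t * Z" by (rule rassoc[OF Ctc Ctc _ e1])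
  have c_e2: "\<And>Z. Z \<in> carrier_mat d d \<Longrightarrow> Ct t * (Ct mt * Z) = 1\<^sub>m d * Z" by (rule rassoc[OF Ctc Ctc _ e2])
  have c_e3: "\<And>Z. Z \<in> carrier_mat d d \<Longrightarrow> Ct th * (Ct mt * Z) = Ct mth * Z" by (rule rassoc[OF Ctc Ctc _ e3])
  have c_e4: "\<And>Z. Z \<in> carrier_mat d d \<Longrightarrow> Ct mth * (Ct th * Z) = 1\<^sub>m d * Z" by (rule rassoc[OF Ctc Ctc _ e4])
  have c_e5: "\<And>Z. Z \<in> carrier_mat d d \<Longrightarrow> Ct th * (Ct mth * Z) = 1\<^sub>m d * Z" by (rule rassoc[OF Ctc Ctc _ e5])
  have c_e6: "\<And>Z. Z \<in> carrier_mat d d \<Longrightarrow> Ct th * (Ct m1 * Z) = Ct tm * Z" by (rule rassoc[OF Ctc Ctc _ e6])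
  have c_e7: "\<And>Z. Z \<in> carrier_mat d d \<Longrightarrow> Ct tm * (Ct th * Z) = Ct tm1 * Z" by (rule rassoc[OF Ctc Ctc _ e7])
  have c_e8: "\<And>Z. Z \<in> carrier_mat d d \<Longrightarrow> Ct mth * (Ct hm * Z) = Ct mh * Z" by (rule rassoc[OF Ctc Ctc _ e8])
  note kit = as mc one_l one_r Ahc Aihc Pc Qc Bc Ctc Gc Gic Ric
    c_AhAih c_AihAh c_AihAih c_GGi c_GiG c_e1 c_e2 c_e3 c_e4 c_e5 c_e6 c_e7 c_e8
    AhAih AihAh AihAih GGi GiG e1 e2 e3 e4 e5 e6 e7 e8
  have RRi: "R' * Ri = 1\<^sub>m d" unfolding R'_def Ri_def by (simp add: kit)
  have minvR: "minv R' = Ri" by (rule minv_eq[OF R'c Ric RRi])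
  have GiGi: "Gi * Gi = Ri"
  proof -
    have "Gi * Gi = mpow R' (-1)" unfolding Gi_def by (rule mpow_add'[OF hR], simp)
    also have "\<dots> = minv R'" using minv_mpow[OF hR] by simp
    finally show ?thesis using minvR by simp
  qed
  define K where "K = Gi * Ah * Ct th"
  have Kc: "K \<in> carrier_mat d d" unfolding K_def by (simp add: kit)
  have adjK: "mat_adjoint K = Ct th * Ah * Gi"
  proof -
    have "mat_adjoint K = mat_adjoint (Ct th) * mat_adjoint (Gi * Ah)"
      unfolding K_def by (rule adj_mult, use Gic Ahc Ctc in simp)
    also have "mat_adjoint (Gi * Ah) = Ah * Gi"
      by (subst adj_mult, use Gic Ahc Gih Ahh in simp_all)
    finally show ?thesis unfolding Cth by (simp add: kit)
  qed
  have aKc: "mat_adjoint K \<in> carrier_mat d d" using Kc by simp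
  have KK1: "K * mat_adjoint K = 1\<^sub>m d"
  proof -
    have "K * mat_adjoint K = Gi * R' * Gi" unfolding adjK unfolding K_def R'_def by (simp add: kit)
    also have "\<dots> = 1\<^sub>m d" unfolding GG[symmetric] by (simp add: kit)
    finally show ?thesis .
  qed
  have KK2: "mat_adjoint K * K = 1\<^sub>m d"
  proof -
    have "mat_adjoint K * K = Ct th * Ah * (Gi * Gi) * Ah * Ct th" unfolding adjK unfolding K_def by (simp add: kit)
    also have "\<dots> = 1\<^sub>m d" unfolding GiGi Ri_def by (simp add: kit)
    finally show ?thesis .
  qed
  have K: "unitary_mat d K" unfolding unitary_mat_def using Kc KK1 KK2 by simp
  have c_KK1: "\<And>Z. Z \<in> carrier_mat d d \<Longrightarrow> K * (mat_adjoint K * Z) = 1\<^sub>m d * Z" by (rule rassoc[OF Kc aKc _ KK1])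
  have c_KK2: "\<And>Z. Z \<in> carrier_mat d d \<Longrightarrow> mat_adjoint K * (K * Z) = 1\<^sub>m d * Z" by (rule rassoc[OF aKc Kc _ KK2])
  note kit2 = kit Kc aKc KK1 KK2 c_KK1 c_KK2
  note kit0 = as mc one_l one_r Ahc Aihc Pc Qc Bc Ctc Gc Gic Ric
    c_AhAih c_AihAh c_GGi c_GiG c_e1 c_e2 c_e3 c_e4 c_e5 c_e6 c_e7 c_e8
    AhAih AihAh GGi GiG e1 e2 e3 e4 e5 e6 e7 e8 Kc aKc KK1 KK2 c_KK1 c_KK2
  have GK: "G * K = Ah * Ct th" unfolding K_def by (simp add: kit)
  have G1: "G = Ah * Ct th * mat_adjoint K"
  proof -
    have "G = G * (K * mat_adjoint K)" using KK1 Gc by simp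
    also have "\<dots> = (G * K) * mat_adjoint K" by (simp add: kit2)
    finally show ?thesis unfolding GK .
  qed
  have G2: "G = K * Ct th * Ah"
  proof -
    have "mat_adjoint G = mat_adjoint (mat_adjoint K) * mat_adjoint (Ah * Ct th)"
      unfolding G1 by (rule adj_mult, use Ahc Ctc Kc in simp)
    also have "mat_adjoint (Ah * Ct th) = Ct th * Ah"
      by (subst adj_mult, use Ahc Ctc Cth Ahh in simp_all)
    finally show ?thesis unfolding Gh by (simp add: kit2)
  qed
  have M: "G * P * G = K * Ct t * mat_adjoint K"
  proof -
    have "G * P * G = G * (Aih * Aih) * G" using AihAih by simp
    also have "\<dots> = K * Ct th * Ah * (Aih * Aih) * (Ah * Ct th * mat_adjoint K)"
      by (subst (1) G2, subst G1, simp)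
    also have "\<dots> = K * Ct t * mat_adjoint K" by (simp add: kit0)
    finally show ?thesis .
  qed
  have AhQAh: "Ah * Q * Ah = Ct m1"
  proof -
    have "C * (Ah * Q * Ah) = 1\<^sub>m d" unfolding C_def
      by (simp add: kit rassoc[OF Bc Qc _ BQ])
    then have "minv C = Ah * Q * Ah" using minv_eq[of C d] hasdec_carrier[OF hC] by (simp add: kit)
    thus ?thesis unfolding Ct_def m1_def using minv_mpow[OF hC] by simp
  qed
  have N: "G * Q * G = K * Ct tm1 * mat_adjoint K"
  proof -
    have "G * Q * G = K * Ct th * (Ah * Q * Ah) * Ct th * mat_adjoint K"
      by (subst (1) G2, subst G1, simp add: kit2)
    also have "\<dots> = K * Ct tm1 * mat_adjoint K" unfolding AhQAh by (simp add: kit2)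
    finally show ?thesis .
  qed
  have sM: "msqrt (G * P * G) = K * Ct th * mat_adjoint K"
    unfolding M msqrt_def mpow_conj(2)[OF hCt K] unfolding Ct_def
    by (subst mpow_mpow'[OF hC], simp_all add: th_def hm_def tm1_def)
  have sN: "msqrt (G * Q * G) = K * Ct hm * mat_adjoint K"
    unfolding N msqrt_def mpow_conj(2)[OF hCt K] unfolding Ct_def
    by (subst mpow_mpow'[OF hC], simp_all add: th_def hm_def tm1_def)
  have Gi_eq: "Gi = K * Ct mth * Aih"
  proof -
    have "G * (K * Ct mth * Aih) = 1\<^sub>m d"
    proof -
      have "G * (K * Ct mth * Aih) = (G * K) * Ct mth * Aih" by (simp add: kit2)
      also have "\<dots> = 1\<^sub>m d" unfolding GK by (simp add: kit2)
      finally show ?thesis .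
    qed
    then have "Gi * (G * (K * Ct mth * Aih)) = Gi" using Gic by simp
    thus ?thesis by (simp add: kit2)
  qed
  have Gi_eq2: "Gi = Aih * Ct mth * mat_adjoint K"
  proof -
    have "mat_adjoint Gi = mat_adjoint Aih * mat_adjoint (K * Ct mth)"
      unfolding Gi_eq by (rule adj_mult, use Aihc Ctc Kc in simp)
    also have "mat_adjoint (K * Ct mth) = Ct mth * mat_adjoint K"
      by (subst adj_mult, use Kc Ctc Cth in simp_all)
    finally show ?thesis unfolding Gih Aihh by (simp add: kit2)
  qed
  have sR: "msqrt R' = G" unfolding msqrt_def G_def ..
  have mR: "minv R' = Gi * Gi" using GiGi minvR by simp
  have lhs: "gen_fidelity R P Q = mtrace (K * (P * Ct mh) * mat_adjoint K)"
  proof -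
    have "gen_fidelity R P Q = mtrace (K * Ct th * mat_adjoint K * (Gi * Gi) * (K * Ct hm * mat_adjoint K))"
      unfolding gen_fidelity_def RR' sR mR sM sN ..
    also have "K * Ct th * mat_adjoint K * (Gi * Gi) * (K * Ct hm * mat_adjoint K)
        = K * (P * Ct mh) * mat_adjoint K"
      apply (subst (1) Gi_eq, subst Gi_eq2)
      by (simp add: kit2)
    finally show ?thesis .
  qed
  have sP: "msqrt P = Aih"
    unfolding msqrt_def Aih_def A_eq by (subst mpow_mpow'[OF hP], simp_all)
  have mP: "mpow P (-1/2) = Ah"
    unfolding Ah_def A_eq by (subst mpow_mpow'[OF hP], simp_all)
  have sC: "msqrt (Ah * Q * Ah) = Ct mh"
    unfolding AhQAh msqrt_def Ct_def by (subst mpow_mpow'[OF hC], simp_all add: m1_def mh_def)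
  have rhs: "matsumoto_fidelity P Q = mtrace (P * Ct mh)"
  proof -
    have "matsumoto_fidelity P Q = mtrace ((Aih * Ct mh) * Aih)"
      unfolding matsumoto_fidelity_def mgeo_mean_def sP mP sC ..
    also have "\<dots> = mtrace (Aih * (Aih * Ct mh))"
      using mtrace_comm[OF mult_carrier_mat[OF Aihc Ctc] Aihc] by simp
    also have "Aih * (Aih * Ct mh) = P * Ct mh" by (simp add: kit)
    finally show ?thesis .
  qed
  show ?thesis unfolding lhs rhs
    by (rule mtrace_unitary_conj[OF K], simp add: kit)
qed

end
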